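(* For a positive integer $X$, let $N_X$ denote the number of distinct orbits $o(\mathbf{x})$, $\mathbf{x}\in\mathbb{Z}^2$, with $\operatorname{length}(o(\mathbf{x}))=X$. Then $N_X=0$ if $4\nmid X$, and $$N_X=\Big\lfloor\frac X6\Big\rfloor-\Big\lceil\frac X{12}\Big\rceil+1\quad\text{if } 4\mid X.$$
   Context: Define $\mathcal K_1(x_1,x_2)=(-x_1+x_2,x_2)$ and $\mathcal K_2(x_1,x_2)=(x_1,x_1-x_2)$ on $\mathbb{Z}^2$. The orbit $o(\mathbf{x})$ is the set of points obtained from $\mathbf{x}$ by repeated application of $\mathcal K_1,\mathcal K_2$: $(x_1,x_2)$, $(-x_1+x_2,x_2)$, $(-x_1+x_2,-x_1)$, $(-x_2,-x_1)$, $(-x_2,x_1-x_2)$, $(x_1,x_1-x_2)$. Orbits partition $\mathbb{Z}^2$. The length of the orbit is the Euclidean length of the closed path through the six points in the listed order: $$\operatorname{length}(o(\mathbf{x}))=2\big(|2x_1-x_2|+|x_1+x_2|+|2x_2-x_1|\big).$$ *)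

theory Defs
  imports Complex_Main
begin

definition K1 :: "int \<times> int \<Rightarrow> int \<times> int" where
  "K1 p = (- fst p + snd p, snd p)"

definition K2 :: "int \<times> int \<Rightarrow> int \<times> int" where
  "K2 p = (fst p, fst p - snd p)"

definition Kstep :: "int \<times> int \<Rightarrow> int \<times> int \<Rightarrow> bool" where
  "Kstep p q \<longleftrightarrow> q = K1 p \<or> q = K2 p"

definition orbit :: "int \<times> int \<Rightarrow> (int \<times> int) set" where
  "orbit x = {y. Kstep\<^sup>*\<^sup>* x y}"

text \<open>Length of the orbit of x (closed path through the six listed points).\<close>
definition orbit_length :: "int \<times> int \<Rightarrow> int" where
  "orbit_length x = 2 * (\<bar>2 * fst x - snd x\<bar> + \<bar>fst x + snd x\<bar> + \<bar>2 * snd x - fst x\<bar>)"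

definition orbits_of_length :: "int \<Rightarrow> (int \<times> int) set set" where
  "orbits_of_length X = {S. \<exists>x. S = orbit x \<and> orbit_length x = X}"

end

theory Submission
  imports Defs
begin

definition six :: "int \<times> int \<Rightarrow> (int \<times> int) set" where
  "six p = (case p of (a,b) \<Rightarrow> {(a,b),(b-a,b),(b-a,-a),(-b,-a),(-b,a-b),(a,a-b)})"

definition D :: "(int \<times> int) set" where
  "D = {(a,b). b \<le> 2*a \<and> a \<le> 2*b}"

lemma Kstep_sym: "Kstep p q \<Longrightarrow> Kstep q p"
  by (cases p) (auto simp: Kstep_def K1_def K2_def)

lemma reach_six: "Kstep\<^sup>*\<^sup>* x y \<Longrightarrow> y \<in> six x"
proof (induction rule: rtranclp_induct)
  case base then show ?case by (cases x) (simp add: six_def)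
next
  case (step y z)
  then show ?case by (cases x) (auto simp: six_def Kstep_def K1_def K2_def)
qed

lemma six_reach: "y \<in> six x \<Longrightarrow> Kstep\<^sup>*\<^sup>* x y"
proof -
  obtain a b where x: "x = (a,b)" by (cases x)
  have s1: "Kstep (a,b) (b-a,b)" by (simp add: Kstep_def K1_def)
  have s2: "Kstep (b-a,b) (b-a,-a)" by (simp add: Kstep_def K2_def)
  have s3: "Kstep (b-a,-a) (-b,-a)" by (simp add: Kstep_def K1_def)
  have s4: "Kstep (-b,-a) (-b,a-b)" by (simp add: Kstep_def K2_def)
  have s5: "Kstep (a,b) (a,a-b)" by (simp add: Kstep_def K2_def)
  assume "y \<in> six x"
  then have "y = (a,b) \<or> y = (b-a,b) \<or> y = (b-a,-a) \<or> y = (-b,-a) \<or> y = (-b,a-b) \<or> y = (a,a-b)"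
    by (simp add: six_def x)
  then show ?thesis
    using s1 s2 s3 s4 s5 x
    by (meson converse_rtranclp_into_rtranclp rtranclp.rtrancl_refl)
qed

lemma reach_iff: "Kstep\<^sup>*\<^sup>* x y \<longleftrightarrow> y \<in> six x"
  using reach_six six_reach by blast

lemma reach_symm: "Kstep\<^sup>*\<^sup>* x y \<Longrightarrow> Kstep\<^sup>*\<^sup>* y x"
proof (induction rule: rtranclp_induct)
  case base then show ?case by simp
next
  case (step y z)
  then show ?case using Kstep_sym by (meson converse_rtranclp_into_rtranclp)
qed

lemma orbit_eq: "Kstep\<^sup>*\<^sup>* x y \<Longrightarrow> orbit x = orbit y"
proof -
  assume h: "Kstep\<^sup>*\<^sup>* x y"
  then have h2: "Kstep\<^sup>*\<^sup>* y x" by (rule reach_symm)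
  show ?thesis unfolding orbit_def
    using h h2 by (intro set_eqI) (meson mem_Collect_eq rtranclp_trans)
qed

lemma len_step: "Kstep p q \<Longrightarrow> orbit_length q = orbit_length p"
  by (cases p) (auto simp: Kstep_def K1_def K2_def orbit_length_def; arith)

lemma len_reach: "Kstep\<^sup>*\<^sup>* x y \<Longrightarrow> orbit_length y = orbit_length x"
  by (induction rule: rtranclp_induct) (auto dest: len_step)

lemma D_exists: "\<exists>p\<in>D. p \<in> six x"
proof -
  obtain a b where x: "x = (a,b)" by (cases x)
  have "(b \<le> 2*a \<and> a \<le> 2*b) \<or> (2*a \<le> b \<and> -a \<le> b) \<or> (a \<le> 2*b \<and> b \<le> -a)
     \<or> (2*b \<le> a \<and> 2*a \<le> b) \<or> (a \<le> -b \<and> b \<le> 2*a) \<or> (-b \<le> a \<and> 2*b \<le> a)"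
    by arith
  then show ?thesis
  proof (elim disjE)
    assume "b \<le> 2*a \<and> a \<le> 2*b" then show ?thesis by (intro bexI[of _ "(a,b)"]) (auto simp: x six_def D_def)
  next
    assume "2*a \<le> b \<and> -a \<le> b" then show ?thesis by (intro bexI[of _ "(b-a,b)"]) (auto simp: x six_def D_def)
  next
    assume "a \<le> 2*b \<and> b \<le> -a" then show ?thesis by (intro bexI[of _ "(b-a,-a)"]) (auto simp: x six_def D_def)
  next
    assume "2*b \<le> a \<and> 2*a \<le> b" then show ?thesis by (intro bexI[of _ "(-b,-a)"]) (auto simp: x six_def D_def)
  next
    assume "a \<le> -b \<and> b \<le> 2*a" then show ?thesis by (intro bexI[of _ "(-b,a-b)"]) (auto simp: x six_def D_def)
  next
    assume "-b \<le> a \<and> 2*b \<le> a" then show ?thesis by (intro bexI[of _ "(a,a-b)"]) (auto simp: x six_def D_def)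
  qed
qed

lemma D_unique: "p \<in> D \<Longrightarrow> q \<in> D \<Longrightarrow> q \<in> six p \<Longrightarrow> q = p"
  by (cases p) (auto simp: D_def six_def)

lemma len_D: "p \<in> D \<Longrightarrow> orbit_length p = 4 * (fst p + snd p)"
  by (cases p) (auto simp: D_def orbit_length_def)

lemma orbits_eq: "orbits_of_length X = orbit ` {p \<in> D. orbit_length p = X}"
proof
  show "orbits_of_length X \<subseteq> orbit ` {p \<in> D. orbit_length p = X}"
  proof
    fix S assume "S \<in> orbits_of_length X"
    then obtain x where S: "S = orbit x" and l: "orbit_length x = X"
      by (auto simp: orbits_of_length_def)
    obtain p where p: "p \<in> D" "p \<in> six x" using D_exists by blast
    then have r: "Kstep\<^sup>*\<^sup>* x p" by (simp add: reach_iff)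
    then show "S \<in> orbit ` {p \<in> D. orbit_length p = X}"
      using S l p len_reach[OF r] orbit_eq[OF r] by auto
  qed
  show "orbit ` {p \<in> D. orbit_length p = X} \<subseteq> orbits_of_length X"
    by (auto simp: orbits_of_length_def)
qed

lemma inj_D: "inj_on orbit D"
proof
  fix p q assume p: "p \<in> D" and q: "q \<in> D" and e: "orbit p = orbit q"
  have "q \<in> orbit q" by (simp add: orbit_def)
  then have "q \<in> six p" using e by (simp add: orbit_def reach_iff)
  then show "p = q" using D_unique[OF p q] by simp
qed

lemma set_4n: "{p \<in> D. orbit_length p = 4*n} = (\<lambda>a. (a, n-a)) ` {(n+2) div 3 .. (2*n) div 3}"
proof (intro set_eqI iffI)
  fix p assume h: "p \<in> {p \<in> D. orbit_length p = 4*n}"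
  obtain a b where pe: "p = (a,b)" by (cases p)
  have "a + b = n" using h len_D[of p] by (auto simp: pe)
  moreover have "b \<le> 2*a" "a \<le> 2*b" using h by (auto simp: pe D_def)
  ultimately have "a \<in> {(n+2) div 3 .. (2*n) div 3}" by simp presburger
  then show "p \<in> (\<lambda>a. (a, n-a)) ` {(n+2) div 3 .. (2*n) div 3}"
    using \<open>a+b=n\<close> pe by (intro image_eqI[of _ _ a]) auto
next
  fix p assume "p \<in> (\<lambda>a. (a, n-a)) ` {(n+2) div 3 .. (2*n) div 3}"
  then obtain a where a: "(n+2) div 3 \<le> a" "a \<le> (2*n) div 3" and pe: "p = (a, n-a)" by auto
  have "n - a \<le> 2*a" "a \<le> 2*(n-a)" using a by presburger+
  then have "p \<in> D" by (simp add: D_def pe)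
  then show "p \<in> {p \<in> D. orbit_length p = 4*n}" using len_D[of p] by (simp add: pe)
qed

lemma set_not4: "\<not> 4 dvd X \<Longrightarrow> {p \<in> D. orbit_length p = X} = {}"
  using len_D by fastforce

theorem mainTheorem16:
  fixes X :: int
  assumes "X > 0"
  shows "finite (orbits_of_length X) \<and>
         (\<not> 4 dvd X \<longrightarrow> card (orbits_of_length X) = 0) \<and>
         (4 dvd X \<longrightarrow> int (card (orbits_of_length X)) = floor (real_of_int X / 6) - ceiling (real_of_int X / 12) + 1)"
proof (cases "4 dvd X")
  case True
  then obtain n where n: "X = 4*n" by blast
  have n0: "n > 0" using assms n by simp
  have eq: "orbits_of_length X = orbit ` ((\<lambda>a. (a, n-a)) ` {(n+2) div 3 .. (2*n) div 3})"
    using orbits_eq set_4n n by simp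
  have inj1: "inj_on orbit ((\<lambda>a. (a, n-a)) ` {(n+2) div 3 .. (2*n) div 3})"
    using inj_D set_4n[of n] by (metis (no_types, lifting) inj_on_subset mem_Collect_eq subsetI)
  have inj2: "inj_on (\<lambda>a. (a, n-a)) {(n+2) div 3 .. (2*n) div 3}" by (auto intro: inj_onI)
  have c: "card (orbits_of_length X) = nat ((2*n) div 3 - (n+2) div 3 + 1)"
    using eq card_image[OF inj1] card_image[OF inj2] by simp
  have f1: "floor (real_of_int X / 6) = (2*n) div 3"
  proof -
    have "real_of_int X / 6 = real_of_int (2*n) / real_of_int 3" using n by simp
    then show ?thesis by (simp only: floor_divide_of_int_eq)
  qed
  have f2: "ceiling (real_of_int X / 12) = (n+2) div 3"
  proof -
    have "real_of_int X / 12 = - (real_of_int (-n) / real_of_int 3)" using n by simp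
    then have "ceiling (real_of_int X / 12) = - floor (real_of_int (-n) / real_of_int 3)"
      by (simp add: ceiling_def)
    also have "\<dots> = - ((-n) div 3)" by (simp only: floor_divide_of_int_eq)
    also have "\<dots> = (n+2) div 3" by presburger
    finally show ?thesis .
  qed
  have nn: "(2*n) div 3 - (n+2) div 3 + 1 \<ge> 0" using n0 by presburger
  show ?thesis using True eq c f1 f2 nn by simp
next
  case False
  then show ?thesis using orbits_eq[of X] set_not4[OF False] by simp
qed

end
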